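(* In the setting of the context, assume (G1), (G2), (G3). Let $M:=(2c_D^2c^2c_1^2)\vee(3cc_2)$, let $k\in\mathbb N$ with $M\le M_0^k$ and $\alpha_0^k<1/4$, put $\alpha_M:=\alpha_0^k$ and let $0<\alpha\le\alpha_M$. Then there exists $\delta_0>0$ such that for every $x\in X_0$ and $0<r<R_0(x)$, $$\mu_x^{U(x,\alpha^2r)}(U(x,r))>\delta_0.$$
   Context: $(X,\rho)$ separable metric space, $X_0\subseteq X$ open; $\mathcal M(X)$ finite Borel measures (extended to universally measurable sets), $\|\mu\|=\mu(X)$, $\varepsilon_x$ Dirac measure. For every open $U\subseteq X$ and $x\in X$ a measure $\mu_x^U\in\mathcal M(X)$ is given such that for all open $U,V$ and $x$: $\mu_x^U(U)=0$, $\|\mu_x^U\|\le1$, $\mu_x^U=\varepsilon_x$ if $x\notin U$; $y\mapsto\mu_y^U(E)$ universally measurable for Borel $E$; $\mu_x^U=\int\mu_y^U\,d\mu_x^V(y)$ if $V\subseteq U$. For closed $A$, $\varepsilon_x^A:=\mu_x^{X\setminus A}$. $\mathcal U(X_0)$: open $U$ with $\overline U\subseteq X_0$; $U(x,r)$ open ball; $R_0(x):=\sup\{r>0:\overline{U(x,r)}\subseteq X_0\}$. $G\colon X\times X\to(0,\infty]$ Borel, $G\mu(x)=\int G(x,y)d\mu(y)$, $\operatorname{cap}A:=\sup\{\|\mu\|:\mu\in\mathcal M(X),\mu(X\setminus A)=0,G\mu\le1\}$. (G1): there is $c_1\ge1$ such that for all $U\in\mathcal U(X_0)$, $x\in U$,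 $\delta>0$, closed $A\subseteq U$ there are a closed neighborhood $B\subseteq U$ of $A$ and a measure $\nu$ carried by $B$ with $\|\varepsilon_x^B\|-\delta<c_1\|\varepsilon_x^A\|$ and $\|\varepsilon_y^A\|\le G\nu(y)\le c_1\|\varepsilon_y^B\|$ for all $y$. (G2): there are a strictly decreasing continuous $g\colon[0,\infty)\to(0,\infty]$ and $c,c_D,M_0\in[1,\infty)$, $\alpha_0\in(0,1)$ with $g(r/2)\le c_Dg(r)$, $M_0g(r)\le g(\alpha_0r)$ for all $r>0$ and $c^{-1}g\circ\rho\le G\le c\,g\circ\rho$. (G3): there is $c_2\ge1$ with $\operatorname{cap}U(x,r)\ge c_2^{-1}g(r)^{-1}$ for all $x\in X_0$, $0<r<R_0(x)$. *)

theory Defs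
  imports "HOL-Analysis.Analysis" "HOL-Probability.Giry_Monad"
begin

definition fin_borel_measure :: "'a::metric_space measure \<Rightarrow> bool" where
  "fin_borel_measure \<nu> \<longleftrightarrow> sets \<nu> = sets borel \<and> finite_measure \<nu>"

definition mass :: "'a measure \<Rightarrow> real" where
  "mass \<nu> = measure \<nu> (space \<nu>)"

definition univ_measurable :: "('a::metric_space \<Rightarrow> ennreal) \<Rightarrow> bool" where
  "univ_measurable f \<longleftrightarrow>
     (\<forall>\<nu>. fin_borel_measure \<nu> \<longrightarrow> f \<in> borel_measurable (completion \<nu>))"

text \<open>Standing assumptions on the family \<open>\<mu>_x^U\<close>, given as \<open>mu U x\<close>.\<close>
definition harmonic_kernel :: "('a::metric_space set \<Rightarrow> 'a \<Rightarrow> 'a measure) \<Rightarrow> bool" where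
  "harmonic_kernel mu \<longleftrightarrow>
    (\<forall>U x. open U \<longrightarrow>
        fin_borel_measure (mu U x) \<and> emeasure (mu U x) U = 0 \<and> mass (mu U x) \<le> 1 \<and>
        (x \<notin> U \<longrightarrow> mu U x = return borel x)) \<and>
    (\<forall>U E. open U \<longrightarrow> E \<in> sets borel \<longrightarrow> univ_measurable (\<lambda>y. emeasure (mu U y) E)) \<and>
    (\<forall>U V x. open U \<longrightarrow> open V \<longrightarrow> V \<subseteq> U \<longrightarrow>
        (\<forall>E \<in> sets borel. emeasure (mu U x) E =
              (\<integral>\<^sup>+ y. emeasure (mu U y) E \<partial>completion (mu V x))))"

definition swept :: "('a set \<Rightarrow> 'a \<Rightarrow> 'a measure) \<Rightarrow> 'a set \<Rightarrow> 'a \<Rightarrow> 'a measure" where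
  "swept mu A x = mu (- A) x"

definition relcomp_opens :: "'a::metric_space set \<Rightarrow> 'a set set" where
  "relcomp_opens X0 = {U. open U \<and> closure U \<subseteq> X0}"

definition R0 :: "'a::metric_space set \<Rightarrow> 'a \<Rightarrow> ereal" where
  "R0 X0 x = (SUP r \<in> {r. r > 0 \<and> closure (ball x r) \<subseteq> X0}. ereal r)"

definition pot :: "('a \<Rightarrow> 'a \<Rightarrow> ennreal) \<Rightarrow> 'a measure \<Rightarrow> 'a \<Rightarrow> ennreal" where
  "pot G \<nu> x = (\<integral>\<^sup>+ y. G x y \<partial>\<nu>)"

definition cap :: "('a::metric_space \<Rightarrow> 'a \<Rightarrow> ennreal) \<Rightarrow> 'a set \<Rightarrow> ennreal" where
  "cap G A = (SUP \<nu> \<in> {\<nu>. fin_borel_measure \<nu> \<and> emeasure \<nu> (- A) = 0 \<and> (\<forall>x. pot G \<nu> x \<le> 1)}.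
                 emeasure \<nu> (space \<nu>))"

definition G1 :: "'a::metric_space set \<Rightarrow> ('a set \<Rightarrow> 'a \<Rightarrow> 'a measure) \<Rightarrow> ('a \<Rightarrow> 'a \<Rightarrow> ennreal) \<Rightarrow> real \<Rightarrow> bool" where
  "G1 X0 mu G c1 \<longleftrightarrow> c1 \<ge> 1 \<and>
    (\<forall>U \<in> relcomp_opens X0. \<forall>x \<in> U. \<forall>\<delta> > 0. \<forall>A. closed A \<longrightarrow> A \<subseteq> U \<longrightarrow>
      (\<exists>B \<nu>. closed B \<and> B \<subseteq> U \<and> A \<subseteq> interior B \<and>
        fin_borel_measure \<nu> \<and> emeasure \<nu> (- B) = 0 \<and>
        mass (swept mu B x) - \<delta> < c1 * mass (swept mu A x) \<and>
        (\<forall>y. ennreal (mass (swept mu A y)) \<le> pot G \<nu> y \<and>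
             pot G \<nu> y \<le> ennreal (c1 * mass (swept mu B y)))))"

definition G2 :: "('a::metric_space \<Rightarrow> 'a \<Rightarrow> ennreal) \<Rightarrow> (real \<Rightarrow> ennreal) \<Rightarrow> real \<Rightarrow> real \<Rightarrow> real \<Rightarrow> real \<Rightarrow> bool" where
  "G2 G g c cD M0 \<alpha>0 \<longleftrightarrow>
    strict_antimono_on {0..} g \<and> continuous_on {0..} g \<and> (\<forall>r \<ge> 0. g r > 0) \<and>
    c \<ge> 1 \<and> cD \<ge> 1 \<and> M0 \<ge> 1 \<and> 0 < \<alpha>0 \<and> \<alpha>0 < 1 \<and>
    (\<forall>r > 0. g (r / 2) \<le> ennreal cD * g r \<and> ennreal M0 * g r \<le> g (\<alpha>0 * r)) \<and>
    (\<forall>x y. ennreal (1 / c) * g (dist x y) \<le> G x y \<and> G x y \<le> ennreal c * g (dist x y))"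

definition G3 :: "'a::metric_space set \<Rightarrow> ('a \<Rightarrow> 'a \<Rightarrow> ennreal) \<Rightarrow> (real \<Rightarrow> ennreal) \<Rightarrow> real \<Rightarrow> bool" where
  "G3 X0 G g c2 \<longleftrightarrow> c2 \<ge> 1 \<and>
    (\<forall>x \<in> X0. \<forall>r. 0 < r \<longrightarrow> ereal r < R0 X0 x \<longrightarrow>
       cap G (ball x r) \<ge> ennreal (1 / c2) * inverse (g r))"

end

theory Submission
  imports Defs
begin

lemma sep_id_meas:
  assumes sep: "separable_space (euclidean :: 'a::metric_space topology)"
    and M: "sets M = sets borel" and N: "sets N = sets borel"
  shows "(\<lambda>p. p) \<in> measurable (M \<Otimes>\<^sub>M N) (borel :: ('a \<times> 'a) measure)"
proof (rule borel_measurableI)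
  obtain D :: "'a set" where D: "countable D" "closure D = UNIV"
    using sep unfolding separable_space_def euclidean_closure_of by auto
  have sp: "sets (M \<Otimes>\<^sub>M N) = sets (borel \<Otimes>\<^sub>M borel)"
    using M N by (rule sets_pair_measure_cong)
  fix S :: "('a \<times> 'a) set" assume S: "open S"
  define I where "I = {(d,e,q). d \<in> D \<and> e \<in> D \<and> q \<in> \<rat> \<and> ball d q \<times> ball e q \<subseteq> S}"
  have cI: "countable I"
    by (rule countable_subset[of _ "D \<times> D \<times> \<rat>"]) (auto simp: I_def D countable_rat)
  have eq: "S = (\<Union>(d,e,q)\<in>I. ball d q \<times> ball e q)"
  proof
    show "(\<Union>(d,e,q)\<in>I. ball d q \<times> ball e q) \<subseteq> S" by (auto simp: I_def)
  next
    show "S \<subseteq> (\<Union>(d,e,q)\<in>I. ball d q \<times> ball e q)"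
    proof
      fix p assume "p \<in> S"
      obtain a b where p: "p = (a,b)" by (cases p)
      obtain A B where AB: "open A" "open B" "p \<in> A \<times> B" "A \<times> B \<subseteq> S"
        using open_prod_elim[OF S \<open>p \<in> S\<close>] by blast
      obtain e1 where e1: "e1 > 0" "ball a e1 \<subseteq> A" using AB p open_contains_ball by force
      obtain e2 where e2: "e2 > 0" "ball b e2 \<subseteq> B" using AB p open_contains_ball by force
      define e where "e = min e1 e2"
      have e: "e > 0" using e1 e2 by (simp add: e_def)
      obtain q where q: "q \<in> \<rat>" "0 < q" "q < e/2" using Rats_dense_in_real[of 0 "e/2"] e by auto
      obtain d where d: "d \<in> D" "dist d a < q" using closure_approachable[of a D] D q by auto
      obtain d' where d': "d' \<in> D" "dist d' b < q" using closure_approachable[of b D] D q by auto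
      have bb: "ball u q \<subseteq> ball v ee" if "dist u v < q" "2*q < ee" for u v :: 'a and ee
      proof
        fix x assume "x \<in> ball u q"
        hence "dist u x < q" by simp
        moreover have "dist v x \<le> dist v u + dist u x" by (rule dist_triangle)
        ultimately show "x \<in> ball v ee" using that by (simp add: dist_commute)
      qed
      have "ball d q \<subseteq> ball a e1" using bb d q unfolding e_def by simp
      moreover have "ball d' q \<subseteq> ball b e2" using bb d' q unfolding e_def by simp
      ultimately have "ball d q \<times> ball d' q \<subseteq> S" using e1 e2 AB by blast
      hence "(d,d',q) \<in> I" using d d' q by (auto simp: I_def)
      moreover have "p \<in> ball d q \<times> ball d' q" using d d' p by (auto simp: dist_commute)
      ultimately show "p \<in> (\<Union>(d,e,q)\<in>I. ball d q \<times> ball e q)" by blast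
    qed
  qed
  have "(\<Union>(d,e,q)\<in>I. ball d q \<times> ball e q) \<in> sets (borel \<Otimes>\<^sub>M borel)"
    using cI by (intro sets.countable_UN'') (auto intro!: pair_measureI)
  then show "(\<lambda>p. p) -` S \<inter> space (M \<Otimes>\<^sub>M N) \<in> sets (M \<Otimes>\<^sub>M N)"
    using eq sp by (simp add: space_pair_measure M N sets_eq_imp_space_eq[OF M] sets_eq_imp_space_eq[OF N])
qed


lemma fbm_space: "fin_borel_measure \<nu> \<Longrightarrow> space \<nu> = UNIV"
  unfolding fin_borel_measure_def by (metis sets_eq_imp_space_eq space_borel)

lemma fbm_fin: "fin_borel_measure \<nu> \<Longrightarrow> finite_measure \<nu>"
  unfolding fin_borel_measure_def by simp

lemma fbm_sets: "fin_borel_measure \<nu> \<Longrightarrow> sets \<nu> = sets borel"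
  unfolding fin_borel_measure_def by simp

lemma fbm_em: "fin_borel_measure \<nu> \<Longrightarrow> A \<in> sets borel \<Longrightarrow> emeasure \<nu> A = ennreal (measure \<nu> A)"
  using fbm_fin fbm_sets by (metis finite_measure.emeasure_eq_measure)

lemma int_upper:
  assumes "fin_borel_measure \<nu>" "B \<in> sets borel" "emeasure \<nu> (- B) = 0" "\<And>z. z \<in> B \<Longrightarrow> f z \<le> a"
  shows "(\<integral>\<^sup>+z. f z \<partial>\<nu>) \<le> a * emeasure \<nu> UNIV"
proof -
  have sp: "space \<nu> = UNIV" using assms fbm_space by blast
  have "-B \<in> sets borel" using assms(2) by (rule borel_comp)
  hence "-B \<in> null_sets \<nu>" using assms(3) fbm_sets[OF assms(1)] by (simp add: null_sets_def)
  hence ae: "AE z in \<nu>. z \<in> B" by (rule AE_I') (auto simp: sp)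
  have "(\<integral>\<^sup>+z. f z \<partial>\<nu>) \<le> (\<integral>\<^sup>+z. a \<partial>\<nu>)"
    by (rule nn_integral_mono_AE) (use ae assms(4) in auto)
  thus ?thesis by (simp add: sp)
qed

lemma int_lower:
  assumes "fin_borel_measure \<nu>" "B \<in> sets borel" "emeasure \<nu> (- B) = 0" "\<And>z. z \<in> B \<Longrightarrow> a \<le> f z"
  shows "a * emeasure \<nu> UNIV \<le> (\<integral>\<^sup>+z. f z \<partial>\<nu>)"
proof -
  have sp: "space \<nu> = UNIV" using assms fbm_space by blast
  have "-B \<in> sets borel" using assms(2) by (rule borel_comp)
  hence "-B \<in> null_sets \<nu>" using assms(3) fbm_sets[OF assms(1)] by (simp add: null_sets_def)
  hence ae: "AE z in \<nu>. z \<in> B" by (rule AE_I') (auto simp: sp)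
  have "(\<integral>\<^sup>+z. a \<partial>\<nu>) \<le> (\<integral>\<^sup>+z. f z \<partial>\<nu>)"
    by (rule nn_integral_mono_AE) (use ae assms(4) in auto)
  thus ?thesis by (simp add: sp)
qed

lemma Gsec:
  fixes G :: "'a::metric_space \<Rightarrow> 'a \<Rightarrow> ennreal"
  assumes sep: "separable_space (euclidean :: 'a topology)"
    and Gmeas: "(\<lambda>(x, y). G x y) \<in> borel_measurable borel"
    and M: "sets M = sets borel"
  shows "(\<lambda>y. G z y) \<in> borel_measurable M" "(\<lambda>y. G y z) \<in> borel_measurable M"
proof -
  have sp: "space M = UNIV" by (metis M sets_eq_imp_space_eq space_borel)
  have id: "(\<lambda>p. p) \<in> measurable (M \<Otimes>\<^sub>M M) (borel :: ('a \<times> 'a) measure)"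
    by (rule sep_id_meas[OF sep M M])
  have c: "(\<lambda>p. (\<lambda>(x, y). G x y) p) \<in> borel_measurable (M \<Otimes>\<^sub>M M)"
    using measurable_comp[OF id Gmeas] by (simp add: comp_def)
  have "(\<lambda>y. (\<lambda>(x, y). G x y) (z, y)) \<in> borel_measurable M"
    by (rule measurable_compose[OF _ c]) (simp add: sp)
  thus "(\<lambda>y. G z y) \<in> borel_measurable M" by simp
  have "(\<lambda>y. (\<lambda>(x, y). G x y) (y, z)) \<in> borel_measurable M"
    by (rule measurable_compose[OF _ c]) (simp add: sp)
  thus "(\<lambda>y. G y z) \<in> borel_measurable M" by simp
qed

lemma Gfub:
  fixes G :: "'a::metric_space \<Rightarrow> 'a \<Rightarrow> ennreal"
  assumes sep: "separable_space (euclidean :: 'a topology)"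
    and Gmeas: "(\<lambda>(x, y). G x y) \<in> borel_measurable borel"
    and L: "fin_borel_measure L" and N: "fin_borel_measure N"
  shows "(\<integral>\<^sup>+y. (\<integral>\<^sup>+z. k * G z y \<partial>N) \<partial>L) = (\<integral>\<^sup>+z. (\<integral>\<^sup>+y. k * G z y \<partial>L) \<partial>N)"
proof -
  interpret L: finite_measure L using L fbm_fin by blast
  interpret N: finite_measure N using N fbm_fin by blast
  interpret P: pair_sigma_finite N L by unfold_locales
  have id: "(\<lambda>p. p) \<in> measurable (N \<Otimes>\<^sub>M L) (borel :: ('a \<times> 'a) measure)"
    by (rule sep_id_meas[OF sep fbm_sets[OF N] fbm_sets[OF L]])
  have c: "(\<lambda>p. (\<lambda>(x, y). G x y) p) \<in> borel_measurable (N \<Otimes>\<^sub>M L)"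
    using measurable_comp[OF id Gmeas] by (simp add: comp_def)
  have c2: "(\<lambda>(z, y). k * G z y) \<in> borel_measurable (N \<Otimes>\<^sub>M L)"
  proof -
    have "(\<lambda>p. k * (\<lambda>(x, y). G x y) p) \<in> borel_measurable (N \<Otimes>\<^sub>M L)"
      using c by measurable
    thus ?thesis by (simp add: case_prod_beta')
  qed
  show ?thesis using P.Fubini'[OF c2] by simp
qed

lemma arith_final:
  fixes c c1 c2 cD K ga gb gh grr gU La Lb N mB mF mW \<delta> :: real
  assumes c: "c \<ge> 1" and c1: "c1 \<ge> 1" and c2: "c2 \<ge> 1" and cD: "cD \<ge> 1"
    and ga: "ga > 0" and gb: "gb > 0" and grr: "grr > 0" and N: "N \<ge> 0" and Lb: "Lb \<ge> 0" and mB: "mB \<ge> 0"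
    and La5: "5/(6*c2*ga) < La" and Lbb: "gb/c*Lb \<le> 1" and Fub: "La - Lb \<le> c*c*N"
    and Q1: "gU/c*N \<le> c1*mB" and G1a: "mB - \<delta> < c1*mF" and mFW: "mF \<le> mW + c*gh*N"
    and grU: "3/4*ga \<le> gU" and gab: "K*ga \<le> gb" and gar: "K*grr \<le> ga" and ghr: "gh \<le> cD*grr"
    and K1: "2*cD^2*c^2*c1^2 \<le> K" and K2: "3*c*c2 \<le> K" and d: "\<delta> = 1/(16*c^3*c1*c2)"
  shows "1/(16*c^3*c1^2*c2) < mW"
proof -
  have cp: "c > 0" "c1 > 0" "c2 > 0" "cD > 0" using c c1 c2 cD by auto
  have s1: "Lb * gb \<le> c" using Lbb cp by (simp add: field_simps)
  have "3*c*c2*ga \<le> K*ga" using K2 ga by (simp add: mult_right_mono)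
  hence "3*c*c2*ga \<le> gb" using gab by linarith
  hence "Lb * (3*c*c2*ga) \<le> Lb * gb" using Lb by (rule mult_left_mono)
  hence "c * (Lb * (3*c2*ga)) \<le> c * 1" using s1 by (simp add: algebra_simps)
  hence s2: "Lb * (3*c2*ga) \<le> 1" using cp by simp
  define X where "X = c2 * ga"
  have X: "X > 0" using cp ga by (simp add: X_def)
  have s2': "Lb \<le> 1/(3*X)" using s2 X by (simp add: X_def field_simps)
  have "5/(6*X) - 1/(3*X) = 1/(2*X)" using X by (simp add: field_simps)
  hence s3: "1/(2*X) < c*c*N" using La5 s2' Fub by (simp add: X_def) 
  define Q where "Q = ga * N"
  have s4: "1 < 2*c*c*c2*Q" using s3 X by (simp add: X_def Q_def field_simps)
  have "(3/4*ga)*N \<le> gU*N" by (rule mult_right_mono[OF grU N])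
  hence "gU * N \<ge> 3/4 * Q" unfolding Q_def by simp
  hence s5: "3/4*Q \<le> c*c1*mB" using Q1 cp by (simp add: field_simps)
  have "(c*c1)*(mB - \<delta>) < (c*c1)*(c1*mF)" by (rule mult_strict_left_mono[OF G1a]) (use cp in simp)
  hence s6: "c*c1*mB - c*c1*\<delta> < c*c1*(c1*mF)" by (simp add: algebra_simps)
  have s7: "c*gh*N \<le> c*cD*grr*N" using ghr cp N by (simp add: mult_left_mono mult_right_mono)
  have t1: "K*grr*N \<le> ga*N" by (rule mult_right_mono[OF gar N])
  have "(2*cD^2*c^2*c1^2)*grr \<le> K*grr" using K1 grr by (intro mult_right_mono) auto
  hence t2: "(2*cD^2*c^2*c1^2)*grr*N \<le> K*grr*N" using N by (rule mult_right_mono)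
  have "(2*cD^2*c^2*c1^2)*(grr*N) \<le> Q" using t1 t2 unfolding Q_def by (simp only: mult.assoc)
  moreover
  have "2*c*c1^2*(c*cD*grr*N) = cD * (2*c^2*c1^2*(grr*N))" by (simp add: power2_eq_square algebra_simps)
  moreover have "cD * (2*c^2*c1^2*(grr*N)) \<le> cD^2 * (2*c^2*c1^2*(grr*N))"
    using cD grr N by (intro mult_right_mono) (auto simp: power2_eq_square)
  moreover have "cD^2 * (2*c^2*c1^2*(grr*N)) = (2*cD^2*c^2*c1^2)*(grr*N)" by (simp add: algebra_simps)
  ultimately have s8: "2*c*c1^2*(c*cD*grr*N) \<le> Q" by linarith
  have e1: "c*c1*\<delta> = 1/(16*c^2*c2)" using d cp by (simp add: field_simps power2_eq_square power3_eq_cube)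
  have e2: "c*c1^2*(c*cD*grr*N) \<le> Q/2" using s8 by (simp add: algebra_simps)
  have "mF - c*cD*grr*N \<le> mW" using mFW s7 by linarith
  hence "c*c1^2*(mF - c*cD*grr*N) \<le> c*c1^2*mW" using cp by (intro mult_left_mono) auto
  hence e3: "c*c1^2*mF - c*c1^2*(c*cD*grr*N) \<le> c*c1^2*mW" by (simp add: algebra_simps)
  have e4: "c*c1*(c1*mF) = c*c1^2*mF" by (simp add: power2_eq_square)
  have e5: "Q/4 - 1/(16*c^2*c2) < c*c1^2*mW" using s5 s6 e1 e2 e3 e4 by linarith
  have e6: "1/(2*c^2*c2) < Q" using s4 cp by (simp add: field_simps power2_eq_square)
  have e7: "1/(16*c^2*c2) < c*c1^2*mW" using e5 e6 cp by (simp add: field_simps power2_eq_square)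
  thus ?thesis using cp by (simp add: field_simps power2_eq_square power3_eq_cube)
qed

lemma mass_em: "fin_borel_measure m \<Longrightarrow> emeasure m UNIV = ennreal (mass m)"
  using fbm_em[of m UNIV] fbm_space[of m] by (simp add: mass_def)

lemma mass_return: "mass (return borel y) = 1"
  by (simp add: mass_def measure_def emeasure_return)

theorem proposition4p11:
  fixes X0 :: "'a::metric_space set"
    and mu :: "'a set \<Rightarrow> 'a \<Rightarrow> 'a measure"
    and G :: "'a \<Rightarrow> 'a \<Rightarrow> ennreal"
    and g :: "real \<Rightarrow> ennreal"
    and c cD M0 \<alpha>0 c1 c2 \<alpha> :: real
    and k :: nat
  assumes sep: "separable_space (euclidean :: 'a topology)"
    and X0: "open X0"
    and kern: "harmonic_kernel mu"
    and Gmeas: "(\<lambda>(x, y). G x y) \<in> borel_measurable borel"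
    and Gpos: "\<forall>x y. G x y > 0"
    and hG1: "G1 X0 mu G c1"
    and hG2: "G2 G g c cD M0 \<alpha>0"
    and hG3: "G3 X0 G g c2"
    and Mk: "max (2 * cD^2 * c^2 * c1^2) (3 * c * c2) \<le> M0 ^ k"
    and \<alpha>k: "\<alpha>0 ^ k < 1/4"
    and \<alpha>: "0 < \<alpha>" "\<alpha> \<le> \<alpha>0 ^ k"
  shows "\<exists>\<delta>0 > 0. \<forall>x \<in> X0. \<forall>r. 0 < r \<longrightarrow> ereal r < R0 X0 x \<longrightarrow>
           measure (mu (ball x (\<alpha>^2 * r)) x) (ball x r) > \<delta>0"
proof -
  from hG2 have gsa: "strict_antimono_on {0..} g" and gcont: "continuous_on {0..} g"
    and c: "c \<ge> 1" and cD: "cD \<ge> 1" and M0: "M0 \<ge> 1"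
    and a0: "0 < \<alpha>0" "\<alpha>0 < 1"
    and gD: "\<And>r. r > 0 \<Longrightarrow> g (r/2) \<le> ennreal cD * g r"
    and gM: "\<And>r. r > 0 \<Longrightarrow> ennreal M0 * g r \<le> g (\<alpha>0 * r)"
    and Glo: "\<And>x y. ennreal (1/c) * g (dist x y) \<le> G x y"
    and Ghi: "\<And>x y. G x y \<le> ennreal c * g (dist x y)"
    unfolding G2_def by auto
  from hG1 have c1: "c1 \<ge> 1" unfolding G1_def by auto
  from hG3 have c2: "c2 \<ge> 1" unfolding G3_def by auto
  have glt: "g t < g s" if "0 \<le> s" "s < t" for s t
    using gsa that by (auto simp: monotone_on_def)
  have gle: "g t \<le> g s" if "0 \<le> s" "s \<le> t" for s t
  proof (cases "s = t")
    case False thus ?thesis using glt[of s t] that by auto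
  qed simp
  have gfin: "g t < top" if "0 < t" for t
  proof -
    have "g t < g 0" using glt that by simp
    thus ?thesis using top_greatest less_le_trans by blast
  qed
  define gr where "gr t = enn2real (g t)" for t
  have gr_eq: "g t = ennreal (gr t)" if "0 < t" for t
    using gfin[OF that] by (simp add: gr_def ennreal_enn2real_if)
  have gr_pos: "0 < gr t" if "0 < t" for t
  proof -
    have "g (t+1) < g t" using glt[of t "t+1"] that by simp
    hence "0 < g t" by (meson le_less_trans zero_le)
    thus ?thesis using gfin[OF that] by (simp add: gr_def enn2real_positive_iff)
  qed
  have grle: "gr t \<le> gr s" if "0 < s" "s \<le> t" for s t
    unfolding gr_def using that by (intro enn2real_mono gle gfin) auto
  have grD: "gr (t/2) \<le> cD * gr t" if "0 < t" for t
  proof -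
    have e1: "g (t/2) \<le> ennreal cD * g t" by (rule gD[OF that])
    have e2: "ennreal cD * g t = ennreal (cD * gr t)"
      using gr_eq[OF that] cD gr_pos[OF that] by (simp add: ennreal_mult)
    have e3: "g (t/2) = ennreal (gr (t/2))" using gr_eq that by simp
    have "ennreal (gr (t/2)) \<le> ennreal (cD * gr t)" using e1 e2 e3 by simp
    moreover have "0 \<le> cD * gr t" using cD gr_pos[OF that] by simp
    ultimately show ?thesis by (simp add: ennreal_le_iff)
  qed
  have grM: "M0 * gr t \<le> gr (\<alpha>0 * t)" if "0 < t" for t
  proof -
    have e1: "ennreal M0 * g t \<le> g (\<alpha>0 * t)" by (rule gM[OF that])
    have e2: "ennreal M0 * g t = ennreal (M0 * gr t)"
      using gr_eq[OF that] M0 gr_pos[OF that] by (simp add: ennreal_mult)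
    have p: "0 < \<alpha>0 * t" using a0 that by simp
    have e3: "g (\<alpha>0 * t) = ennreal (gr (\<alpha>0 * t))" using gr_eq[OF p] .
    have "ennreal (M0 * gr t) \<le> ennreal (gr (\<alpha>0 * t))" using e1 e2 e3 by simp
    moreover have "0 \<le> gr (\<alpha>0 * t)" using gr_pos[OF p] by simp
    ultimately show ?thesis by (simp add: ennreal_le_iff)
  qed
  have griter: "M0^n * gr t \<le> gr (\<alpha>0^n * t)" if "0 < t" for t n
  proof (induction n)
    case (Suc n)
    have p: "0 < \<alpha>0^n * t" using a0 that by simp
    have "M0^Suc n * gr t = M0 * (M0^n * gr t)" by simp
    also have "\<dots> \<le> M0 * gr (\<alpha>0^n * t)" using Suc M0 by (intro mult_left_mono) auto
    also have "\<dots> \<le> gr (\<alpha>0 * (\<alpha>0^n * t))" by (rule grM[OF p])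
    also have "\<alpha>0 * (\<alpha>0^n * t) = \<alpha>0^Suc n * t" by simp
    finally show ?case .
  qed simp
  define K where "K = M0^k"
  have K1: "2 * cD^2 * c^2 * c1^2 \<le> K" and K2: "3*c*c2 \<le> K" using Mk by (simp_all add: K_def)
  have a1: "\<alpha> < 1/4" using \<alpha> \<alpha>k by linarith
  have kb0: "\<forall>U y. open U \<longrightarrow> fin_borel_measure (mu U y) \<and> emeasure (mu U y) U = 0 \<and>
      mass (mu U y) \<le> 1 \<and> (y \<notin> U \<longrightarrow> mu U y = return borel y)"
    by (rule kern[unfolded harmonic_kernel_def, THEN conjunct1])
  have kbasic: "\<And>U y. open U \<Longrightarrow> fin_borel_measure (mu U y) \<and> emeasure (mu U y) U = 0 \<and>
      mass (mu U y) \<le> 1 \<and> (y \<notin> U \<longrightarrow> mu U y = return borel y)"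
    by (rule kb0[rule_format])
  have kcomp: "\<forall>U V x. open U \<longrightarrow> open V \<longrightarrow> V \<subseteq> U \<longrightarrow>
        (\<forall>E \<in> sets borel. emeasure (mu U x) E =
              (\<integral>\<^sup>+ y. emeasure (mu U y) E \<partial>completion (mu V x)))"
    by (rule kern[unfolded harmonic_kernel_def, THEN conjunct2, THEN conjunct2])
  show ?thesis
  proof (rule exI[of _ "1/(16*c^3*c1^2*c2)"], intro conjI ballI allI impI)
    show "0 < 1/(16*c^3*c1^2*c2)" using c c1 c2 by (intro divide_pos_pos mult_pos_pos) auto
    fix x r assume x: "x \<in> X0" and r: "0 < r" and rR: "ereal r < R0 X0 x"
    define a where "a = \<alpha>*r"
    define b where "b = \<alpha>^2*r"
    have ab: "0 < b" "b < a" "a < r/4" "0 < a"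
      using \<alpha> a1 r by (auto simp: a_def b_def power2_eq_square)
    have gab: "K * gr a \<le> gr b"
    proof -
      have "b \<le> \<alpha>0^k * a" using \<alpha> r by (simp add: a_def b_def power2_eq_square mult_right_mono)
      hence "gr (\<alpha>0^k * a) \<le> gr b" using ab by (intro grle) auto
      thus ?thesis using griter[OF ab(4), of k] unfolding K_def by linarith
    qed
    have gar: "K * gr r \<le> gr a"
    proof -
      have "a \<le> \<alpha>0^k * r" using \<alpha> r by (simp add: a_def mult_right_mono)
      hence "gr (\<alpha>0^k * r) \<le> gr a" using ab by (intro grle) auto
      thus ?thesis using griter[OF r, of k] unfolding K_def by linarith
    qed
    have ghr: "gr (r/2) \<le> cD * gr r" using grD r by simp
    have "(g \<longlongrightarrow> g a) (at a within {0..})" using gcont ab by (auto simp: continuous_on_def)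
    moreover have "ennreal (3/4 * gr a) < g a"
      using gr_eq[OF ab(4)] gr_pos[OF ab(4)] by (simp add: ennreal_less_iff)
    ultimately have "eventually (\<lambda>t. ennreal (3/4 * gr a) < g t) (at a within {0..})"
      by (rule order_tendstoD)
    then obtain d where d: "d > 0"
      "\<And>t. t \<in> {0..} \<Longrightarrow> t \<noteq> a \<Longrightarrow> dist t a < d \<Longrightarrow> ennreal (3/4 * gr a) < g t"
      by (auto simp: eventually_at)
    define rU where "rU = min (a + d/2) (r/2)"
    have rU1: "a < rU" using ab d unfolding rU_def by (simp add: min_def)
    have rU2: "rU \<le> r/2" unfolding rU_def by (simp add: min_def)
    have rU3: "rU \<le> a + d/2" unfolding rU_def by (simp add: min_def)
    note rU = rU1 rU2
    have grU: "3/4 * gr a \<le> gr rU"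
    proof -
      have "ennreal (3/4 * gr a) < g rU"
      proof (rule d(2))
        show "rU \<in> {0..}" "rU \<noteq> a" using rU1 ab by auto
        show "dist rU a < d" using rU1 rU3 d(1) by (simp add: dist_real_def)
      qed
      hence "ennreal (3/4 * gr a) < ennreal (gr rU)" using gr_eq[of rU] rU ab by simp
      moreover have "0 < gr rU" using gr_pos[of rU] rU1 ab(4) by simp
      moreover have "0 \<le> 3/4 * gr a" using gr_pos[OF ab(4)] by simp
      ultimately have "3/4 * gr a < gr rU" using ennreal_less_iff by blast
      thus ?thesis by simp
    qed
    obtain r2 where r2: "r < r2" "closure (ball x r2) \<subseteq> X0"
      using rR unfolding R0_def less_SUP_iff by auto
    have U: "ball x rU \<in> relcomp_opens X0"
    proof -
      have "closure (ball x rU) \<subseteq> closure (ball x r2)" using rU r2 ab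
        by (intro closure_mono subset_ball) auto
      thus ?thesis using r2 by (auto simp: relcomp_opens_def)
    qed
    have xU: "x \<in> ball x rU" using rU ab by simp
    define F1 where "F1 = cball x a - ball x b"
    have F1c: "closed F1" unfolding F1_def by (intro closed_Diff) auto
    have F1U: "F1 \<subseteq> ball x rU" using rU unfolding F1_def by auto
    define \<delta> where "\<delta> = 1/(16*c^3*c1*c2)"
    have \<delta>pos: "\<delta> > 0" unfolding \<delta>_def using c c1 c2 by (intro divide_pos_pos mult_pos_pos) auto
    have "\<exists>B \<nu>. closed B \<and> B \<subseteq> ball x rU \<and> F1 \<subseteq> interior B \<and>
        fin_borel_measure \<nu> \<and> emeasure \<nu> (- B) = 0 \<and>
        mass (swept mu B x) - \<delta> < c1 * mass (swept mu F1 x) \<and>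
        (\<forall>y. ennreal (mass (swept mu F1 y)) \<le> pot G \<nu> y \<and>
             pot G \<nu> y \<le> ennreal (c1 * mass (swept mu B y)))"
    proof -
      have H: "\<forall>U \<in> relcomp_opens X0. \<forall>x \<in> U. \<forall>\<delta> > 0. \<forall>A. closed A \<longrightarrow> A \<subseteq> U \<longrightarrow>
      (\<exists>B \<nu>. closed B \<and> B \<subseteq> U \<and> A \<subseteq> interior B \<and>
        fin_borel_measure \<nu> \<and> emeasure \<nu> (- B) = 0 \<and>
        mass (swept mu B x) - \<delta> < c1 * mass (swept mu A x) \<and>
        (\<forall>y. ennreal (mass (swept mu A y)) \<le> pot G \<nu> y \<and>
             pot G \<nu> y \<le> ennreal (c1 * mass (swept mu B y))))"
        using hG1 unfolding G1_def by (rule conjunct2)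
      show ?thesis by (rule H[rule_format, OF U xU \<delta>pos F1c F1U])
    qed
    then obtain B \<nu> where B: "closed B" "B \<subseteq> ball x rU"
      and \<nu>: "fin_borel_measure \<nu>" "emeasure \<nu> (- B) = 0"
      and G1a: "mass (swept mu B x) - \<delta> < c1 * mass (swept mu F1 x)"
      and G1b: "\<And>y. ennreal (mass (swept mu F1 y)) \<le> pot G \<nu> y"
      and G1c: "\<And>y. pot G \<nu> y \<le> ennreal (c1 * mass (swept mu B y))"
      by blast
    have capb: "ennreal (1/c2) * inverse (g a) \<le> cap G (ball x a)"
    proof -
      have "ereal a < ereal r" using ab by simp
      hence "ereal a < R0 X0 x" using rR by (rule less_trans)
      thus ?thesis using hG3 x ab unfolding G3_def by blast
    qed
    have "ennreal (1/c2) * inverse (g a) = ennreal (1/(c2 * gr a))"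
      using gr_eq[OF ab(4)] gr_pos[OF ab(4)] c2
      by (simp add: inverse_ennreal ennreal_mult[symmetric] field_simps)
    moreover have "ennreal (5/(6*c2*gr a)) < ennreal (1/(c2 * gr a))"
      using gr_pos[OF ab(4)] c2 by (subst ennreal_less_iff) (auto simp: field_simps)
    ultimately have "ennreal (5/(6*c2*gr a)) < cap G (ball x a)" using capb by simp
    then obtain L where L: "fin_borel_measure L" "emeasure L (- ball x a) = 0"
      "\<And>y. pot G L y \<le> 1" "ennreal (5/(6*c2*gr a)) < emeasure L (space L)"
      unfolding cap_def less_SUP_iff by auto
    have spL: "space L = UNIV" using L(1) fbm_space by blast
    have spN: "space \<nu> = UNIV" using \<nu>(1) fbm_space by blast
    interpret Lf: finite_measure L using L(1) fbm_fin by blast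
    interpret Nf: finite_measure \<nu> using \<nu>(1) fbm_fin by blast
    define La where "La = measure L UNIV"
    define Lb where "Lb = measure L (ball x b)"
    define S where "S = ball x a - ball x b"
    define N where "N = measure \<nu> UNIV"
    have emL: "\<And>A. A \<in> sets borel \<Longrightarrow> emeasure L A = ennreal (measure L A)" using fbm_em[OF L(1)] .
    have emN: "\<And>A. A \<in> sets borel \<Longrightarrow> emeasure \<nu> A = ennreal (measure \<nu> A)" using fbm_em[OF \<nu>(1)] .
    have gapos: "0 < gr a" using gr_pos[OF ab(4)] .
    have gbpos: "0 < gr b" using gr_pos[OF ab(1)] .
    have grrpos: "0 < gr r" using gr_pos[OF r] .
    have N0: "N \<ge> 0" unfolding N_def by simp
    have Lb0: "Lb \<ge> 0" unfolding Lb_def by simp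
    have La5: "5/(6*c2*gr a) < La"
    proof -
      have "ennreal (5/(6*c2*gr a)) < ennreal La" using L(4) spL emL[of UNIV] by (simp add: La_def)
      moreover have "0 \<le> 5/(6*c2*gr a)" using c2 gapos by simp
      ultimately show ?thesis using ennreal_less_iff by blast
    qed
    have Lbb: "gr b / c * Lb \<le> 1"
    proof -
      have e: "ennreal (gr b / c) = ennreal (1/c) * g b"
        using gr_eq[OF ab(1)] gbpos c by (simp add: ennreal_mult[symmetric])
      have "(\<integral>\<^sup>+y. ennreal (gr b / c) * indicator (ball x b) y \<partial>L) \<le> pot G L x"
        unfolding pot_def
      proof (rule nn_integral_mono)
        fix y
        show "ennreal (gr b / c) * indicator (ball x b) y \<le> G x y"
        proof (cases "y \<in> ball x b")
          case True
          have "g b \<le> g (dist x y)" using True by (intro gle) auto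
          hence "ennreal (1/c) * g b \<le> ennreal (1/c) * g (dist x y)" by (rule mult_left_mono) simp
          also have "\<dots> \<le> G x y" by (rule Glo)
          finally show ?thesis using True e by simp
        qed simp
      qed
      moreover have "(\<integral>\<^sup>+y. ennreal (gr b / c) * indicator (ball x b) y \<partial>L) = ennreal (gr b / c) * emeasure L (ball x b)"
        using nn_integral_cmult_indicator[of "ball x b" L "ennreal (gr b / c)"] fbm_sets[OF L(1)]
        by (simp add: mult.commute)
      ultimately have "ennreal (gr b / c) * ennreal Lb \<le> 1" using L(3)[of x] emL[of "ball x b"]
        by (simp add: Lb_def)
      moreover have "ennreal (gr b / c * Lb) = ennreal (gr b / c) * ennreal Lb"
        using gbpos c Lb0 by (intro ennreal_mult) auto
      ultimately have "ennreal (gr b / c * Lb) \<le> ennreal 1" by simp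
      thus ?thesis by (subst (asm) ennreal_le_iff) auto
    qed
    have LS: "measure L S = La - Lb"
    proof -
      have "measure L (- ball x a) = 0" using L(2) by (simp add: measure_def)
      moreover have "measure L (space L - ball x a) = measure L (space L) - measure L (ball x a)"
        by (rule Lf.finite_measure_compl) (simp add: fbm_sets[OF L(1)])
      ultimately have Ma: "measure L (ball x a) = La" using spL by (simp add: La_def Compl_eq_Diff_UNIV)
      have "measure L (ball x a - ball x b) = measure L (ball x a) - measure L (ball x b)"
        using ab by (intro Lf.finite_measure_Diff) (auto simp: fbm_sets[OF L(1)] subset_ball)
      thus ?thesis using Ma by (simp add: S_def Lb_def)
    qed
    have cc: "ennreal c * ennreal (1/c) = 1" using c by (simp add: ennreal_mult[symmetric])
    have Gsym: "G y z \<le> ennreal (c*c) * G z y" for y z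
    proof -
      have "g (dist y z) = ennreal c * (ennreal (1/c) * g (dist z y))"
        using cc by (simp add: mult.assoc[symmetric] dist_commute)
      also have "\<dots> \<le> ennreal c * G z y" by (intro mult_left_mono Glo) simp
      finally have "g (dist y z) \<le> ennreal c * G z y" .
      hence "ennreal c * g (dist y z) \<le> ennreal c * (ennreal c * G z y)" by (rule mult_left_mono) simp
      moreover have "ennreal c * (ennreal c * G z y) = ennreal (c*c) * G z y"
        using c by (simp add: ennreal_mult mult.assoc)
      ultimately show ?thesis using Ghi[of y z] order_trans by metis
    qed
    have potS: "1 \<le> pot G \<nu> y" if "y \<in> S" for y
    proof -
      have "y \<notin> - F1" using that by (auto simp: S_def F1_def)
      hence "mu (- F1) y = return borel y" using kbasic[of "- F1" y] F1c by auto
      hence "mass (swept mu F1 y) = 1" by (simp add: swept_def mass_return)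
      thus ?thesis using G1b[of y] by simp
    qed
    have Sb: "S \<in> sets borel" by (simp add: S_def)
    have Fub: "ennreal (measure L S) \<le> ennreal (c*c) * ennreal N"
    proof -
      have "ennreal (measure L S) = (\<integral>\<^sup>+y. indicator S y \<partial>L)"
        using emL[OF Sb] nn_integral_indicator[of S L] fbm_sets[OF L(1)] Sb by simp
      also have "\<dots> \<le> (\<integral>\<^sup>+y. (\<integral>\<^sup>+z. ennreal (c*c) * G z y \<partial>\<nu>) \<partial>L)"
      proof (rule nn_integral_mono)
        fix y
        have "indicator S y \<le> pot G \<nu> y" using potS[of y] by (cases "y \<in> S") auto
        also have "pot G \<nu> y \<le> (\<integral>\<^sup>+z. ennreal (c*c) * G z y \<partial>\<nu>)" unfolding pot_def
          by (rule nn_integral_mono) (rule Gsym)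
        finally show "indicator S y \<le> (\<integral>\<^sup>+z. ennreal (c*c) * G z y \<partial>\<nu>)" .
      qed
      also have "\<dots> = (\<integral>\<^sup>+z. (\<integral>\<^sup>+y. ennreal (c*c) * G z y \<partial>L) \<partial>\<nu>)"
        by (rule Gfub[OF sep Gmeas L(1) \<nu>(1)])
      also have "\<dots> \<le> (\<integral>\<^sup>+z. ennreal (c*c) \<partial>\<nu>)"
      proof (rule nn_integral_mono)
        fix z
        have "(\<integral>\<^sup>+y. ennreal (c*c) * G z y \<partial>L) = ennreal (c*c) * pot G L z"
          unfolding pot_def by (rule nn_integral_cmult) (rule Gsec(1)[OF sep Gmeas fbm_sets[OF L(1)]])
        also have "\<dots> \<le> ennreal (c*c) * 1" using L(3) by (intro mult_left_mono) auto
        finally show "(\<integral>\<^sup>+y. ennreal (c*c) * G z y \<partial>L) \<le> ennreal (c*c)" by simp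
      qed
      also have "\<dots> = ennreal (c*c) * ennreal N" using spN emN[of UNIV] by (simp add: N_def)
      finally show ?thesis .
    qed
    have FubR: "La - Lb \<le> c*c*N"
    proof -
      have "ennreal (La - Lb) \<le> ennreal (c*c*N)" using Fub LS c N0 by (simp add: ennreal_mult)
      thus ?thesis using c N0 by (simp add: ennreal_le_iff)
    qed
    have Bsets: "B \<in> sets borel" using B(1) by (simp add: borel_closed)
    have Pxlo: "ennreal (gr rU / c) * emeasure \<nu> UNIV \<le> pot G \<nu> x"
      unfolding pot_def
    proof (rule int_lower[OF \<nu>(1) Bsets \<nu>(2)])
      fix z assume "z \<in> B"
      hence "dist x z < rU" using B(2) by auto
      hence "g rU \<le> g (dist x z)" by (intro gle) auto
      hence "ennreal (1/c) * g rU \<le> ennreal (1/c) * g (dist x z)" by (rule mult_left_mono) simp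
      also have "\<dots> \<le> G x z" by (rule Glo)
      finally have "ennreal (1/c) * g rU \<le> G x z" .
      moreover have "ennreal (gr rU / c) = ennreal (1/c) * g rU"
        using gr_eq[of rU] rU1 ab gr_pos[of rU] c by (simp add: ennreal_mult[symmetric])
      ultimately show "ennreal (gr rU / c) \<le> G x z" by simp
    qed
    have far: "pot G \<nu> y \<le> ennreal (c * gr (r/2)) * emeasure \<nu> UNIV" if "y \<notin> ball x r" for y
      unfolding pot_def
    proof (rule int_upper[OF \<nu>(1) Bsets \<nu>(2)])
      fix z assume "z \<in> B"
      hence z: "dist x z < rU" using B(2) by auto
      have "r \<le> dist x y" using that by simp
      moreover have "dist x y \<le> dist x z + dist z y" by (rule dist_triangle)
      ultimately have "r/2 \<le> dist y z" using z rU2 by (simp add: dist_commute)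
      hence "g (dist y z) \<le> g (r/2)" using r by (intro gle) auto
      hence "ennreal c * g (dist y z) \<le> ennreal c * g (r/2)" by (rule mult_left_mono) simp
      hence "G y z \<le> ennreal c * g (r/2)" using Ghi[of y z] order_trans by metis
      moreover have "ennreal c * g (r/2) = ennreal (c * gr (r/2))"
        using gr_eq[of "r/2"] r c gr_pos[of "r/2"] by (simp add: ennreal_mult)
      ultimately show "G y z \<le> ennreal (c * gr (r/2))" by simp
    qed
    define mB where "mB = mass (swept mu B x)"
    define mF where "mF = mass (swept mu F1 x)"
    define mV where "mV = mu (ball x b) x"
    define mW where "mW = measure mV (ball x r)"
    have mB0: "mB \<ge> 0" by (simp add: mB_def mass_def)
    have Q1: "gr rU / c * N \<le> c1 * mB"
    proof -
      have "ennreal (gr rU / c * N) = ennreal (gr rU / c) * ennreal N"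
        using gr_pos[of rU] rU1 ab c N0 by (intro ennreal_mult) auto
      also have "\<dots> = ennreal (gr rU / c) * emeasure \<nu> UNIV" using emN[of UNIV] by (simp add: N_def)
      also have "\<dots> \<le> pot G \<nu> x" by (rule Pxlo)
      also have "\<dots> \<le> ennreal (c1 * mB)" using G1c[of x] by (simp add: mB_def)
      finally have "ennreal (gr rU / c * N) \<le> ennreal (c1 * mB)" .
      thus ?thesis using c1 mB0 by (simp add: ennreal_le_iff)
    qed
    have openF: "open (- F1)" using F1c by (simp add: open_Compl)
    have Vsub: "ball x b \<subseteq> - F1" unfolding F1_def by auto
    have comp: "emeasure (mu (-F1) x) UNIV = (\<integral>\<^sup>+ y. emeasure (mu (-F1) y) UNIV \<partial>completion mV)"
      unfolding mV_def by (rule kcomp[rule_format, OF openF open_ball Vsub]) simp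
    have fV: "fin_borel_measure mV" unfolding mV_def using kbasic[of "ball x b" x] by simp
    have fF: "\<And>y. fin_borel_measure (mu (-F1) y)" by (rule conjunct1[OF kbasic[OF openF]])
    define s where "s = c * gr (r/2) * N"
    have s0: "s \<ge> 0" using c gr_pos[of "r/2"] r N0 by (simp add: s_def)
    have pw: "emeasure (mu (-F1) y) UNIV \<le> indicator (ball x r) y + ennreal s" for y
    proof (cases "y \<in> ball x r")
      case True
      have "emeasure (mu (-F1) y) UNIV = ennreal (mass (mu (-F1) y))" using mass_em[OF fF] .
      also have "\<dots> \<le> 1" using kbasic[of "-F1" y] openF by simp
      also have "\<dots> \<le> indicator (ball x r) y + ennreal s" using True by simp
      finally show ?thesis .
    next
      case False
      have "emeasure (mu (-F1) y) UNIV = ennreal (mass (swept mu F1 y))"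
        using mass_em[OF fF] by (simp add: swept_def)
      also have "\<dots> \<le> pot G \<nu> y" by (rule G1b)
      also have "\<dots> \<le> ennreal (c * gr (r/2)) * emeasure \<nu> UNIV" using far[OF False] .
      also have "\<dots> = ennreal s" using emN[of UNIV] c gr_pos[of "r/2"] r N0
        by (simp add: s_def N_def ennreal_mult)
      finally show ?thesis using False by simp
    qed
    have mFW: "mF \<le> mW + s"
    proof -
      have spV: "space mV = UNIV" using fV fbm_space by blast
      have bm: "ball x r \<in> sets mV" using fbm_sets[OF fV] by simp
      have "ennreal mF = emeasure (mu (-F1) x) UNIV" using mass_em[OF fF] by (simp add: mF_def swept_def)
      also have "\<dots> \<le> (\<integral>\<^sup>+ y. indicator (ball x r) y + ennreal s \<partial>completion mV)"
        unfolding comp by (rule nn_integral_mono) (rule pw)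
      also have "\<dots> = (\<integral>\<^sup>+ y. indicator (ball x r) y + ennreal s \<partial>mV)" by (rule nn_integral_completion)
      also have "\<dots> = emeasure mV (ball x r) + ennreal s * emeasure mV UNIV"
        using bm spV by (subst nn_integral_add) (auto simp: nn_integral_indicator)
      also have "\<dots> \<le> ennreal mW + ennreal s * 1"
      proof (rule add_mono)
        show "emeasure mV (ball x r) \<le> ennreal mW" using fbm_em[OF fV, of "ball x r"] by (simp add: mW_def)
        have "mass mV \<le> 1" using kbasic[of "ball x b" x] by (simp add: mV_def)
        hence "emeasure mV UNIV \<le> 1" using mass_em[OF fV] by simp
        thus "ennreal s * emeasure mV UNIV \<le> ennreal s * 1" by (rule mult_left_mono) simp
      qed
      also have "\<dots> = ennreal (mW + s)" using s0 by (simp add: mW_def ennreal_plus)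
      finally have "ennreal mF \<le> ennreal (mW + s)" .
      moreover have "0 \<le> mW + s" using s0 by (simp add: mW_def)
      ultimately show ?thesis using ennreal_le_iff by blast
    qed
    have G1a': "mB - \<delta> < c1 * mF" using G1a by (simp add: mB_def mF_def)
    have mFW': "mF \<le> mW + c * gr (r/2) * N" using mFW by (simp add: s_def)
    have "1/(16*c^3*c1^2*c2) < mW"
      by (rule arith_final[OF c c1 c2 cD gapos gbpos grrpos N0 Lb0 mB0 La5 Lbb FubR Q1 G1a' mFW' grU gab gar ghr K1 K2 \<delta>_def])
    thus "1/(16*c^3*c1^2*c2) < measure (mu (ball x (\<alpha>^2 * r)) x) (ball x r)"
      by (simp add: mW_def mV_def b_def)
  qed
qed

end
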